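(* Assume the setting described in the context and fix a permutation $\pi$ of $F$. Suppose that either (1) there are vectors $\lambda,\mu\in\mathbb{R}^F$ with $\mu_f\neq0$ and a constant $\theta\in(0,1)$ such that $\frac{\lambda_f}{\mu_f}\sum_{S\in\mathrm{Ind}(\Gamma(f))}\mu(S)\le\theta$ for all $f\in F$, where $\mu(S)=\prod_{g\in S}\mu_g$; or (2) $(\rho,\sim)$ satisfies Shearer's condition with vectors $p,\lambda$ and constant $\theta$, in which case we set $\mu(R)=q_R(p)/q_\varnothing(p)$. Then for every $R\in\mathrm{Ind}(F)$ and every integer $t\ge0$, $$\sum_{W\in\mathrm{Stab}_\pi(R,t)}\lambda_W\le\mu(R)\,\theta^t.$$
   Context: Setting: $\Omega$ is a finite set and $F$ a finite set of flaws, each a nonempty subset of $\Omega$; $F_\sigma=\{f:\sigma\in f\}$. For $\sigma\in\Omega$ and $f\in F_\sigma$ there is a probability distribution $\rho(\cdot\mid f,\sigma)$ on $\Omega$ with support $A(f,\sigma)$. A distribution $\omega$ on $\Omega$ has $\omega(\sigma)>0$ for all $\sigma$. A walk is a sequence $\sigma_1\xrightarrow{w_1}\sigma_2\cdots\xrightarrow{w_t}\sigma_{t+1}$ with $w_i\in F_{\sigma_i}$ and $\sigma_{i+1}\in A(w_i,\sigma_i)$; its word is $w_1\ldots w_t$. $\sim$ is a fixed symmetric relation on $F$ (loops allowed), with $\Gamma(f)=\{g:f\sim g\}$, $\Gamma^+(f)=\Gamma(f)\cup\{f\}$ and $\Gamma^+(S)=\bigcup_{f\in S}\Gamma^+(f)$.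 It is assumed that for every step $\sigma\xrightarrow{f}\sigma'$ of a walk, $F_{\sigma'}\subseteq(F_\sigma\setminus\{f\})\cup\Gamma(f)$. A set $S$ is independent if $f\not\sim g$ for distinct $f,g\in S$; $\mathrm{Ind}(S)$ is the family of independent subsets of $S$. A word is a finite sequence of flaws; for $W=w_1\ldots w_t$ let $|W|=t$, $\lambda_W=\prod_i\lambda_{w_i}$ and $\mathrm{REV}[W]=w_t\ldots w_1$. A sequence of sets $(I_1,\ldots,I_s)$ with $s\ge1$ is stable if each $I_r\in\mathrm{Ind}(F)$ and $I_{r+1}\subseteq\Gamma^+(I_r)$ for $r\in[s-1]$. A word $W$ is stable if it can be partitioned as $W=W_1\ldots W_s$ into nonempty words such that the flaws within each $W_r$ are distinct and $(I_1,\ldots,I_s)$ is stable, where $I_r$ is the set of flaws in $W_r$; such a partition is unique. Let $\preceq_\pi$ be the total order on $F$ given by $\pi$. $W$ is $\pi$-stable if, moreover, the flaws in each $W_r$ appear in strictly $\prec_\pi$-increasing order. For a stable word $W$ let $R_W=I_1$, and let $R_W=\varnothing$ if $W$ is empty. $\mathrm{Stab}_\pi$ is the set of $\pi$-stable words $W$ such that some walk has word $W$ or $\mathrm{REV}[W]$, and $\mathrm{Stab}_\pi(R,t)=\{W\in\mathrm{Stab}_\pi:R_W=R,\ |W|\ge t\}$. Shearer's condition: $q_S(p)=\sum_{I:S\subseteq I\in\mathrm{Ind}(F)}(-1)^{|I|-|S|}\prod_{f\in I}p_f$. One requires $q_S(p)\ge0$ for all $S$ and $q_\varnothing(p)>0$,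 together with a vector $\lambda$ satisfying $\lambda_f\ge\sum_{\sigma\in f:\sigma'\in A(f,\sigma)}\rho(\sigma'\mid f,\sigma)\omega(\sigma)/\omega(\sigma')$ for all $f,\sigma'$, a constant $\theta\in(0,1)$, and $\lambda_f\le\theta p_f$ for all $f$. *)

theory Defs
  imports "HOL-Analysis.Analysis"
begin

(* Flaws are subsets of Omega, so a flaw has type 'a set; F :: 'a set set.
   rho f s s' = rho(s' | f, s);  adj is the symmetric relation ~ on F. *)

definition Fs :: "'a set set \<Rightarrow> 'a \<Rightarrow> 'a set set" where
  "Fs F s = {f \<in> F. s \<in> f}"

definition Asupp :: "'a set \<Rightarrow> ('a set \<Rightarrow> 'a \<Rightarrow> 'a \<Rightarrow> real) \<Rightarrow> 'a set \<Rightarrow> 'a \<Rightarrow> 'a set" where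
  "Asupp Omega rho f s = {s' \<in> Omega. rho f s s' > 0}"

definition Gam :: "'a set set \<Rightarrow> ('a set \<Rightarrow> 'a set \<Rightarrow> bool) \<Rightarrow> 'a set \<Rightarrow> 'a set set" where
  "Gam F adj f = {g \<in> F. adj f g}"

definition GamP :: "'a set set \<Rightarrow> ('a set \<Rightarrow> 'a set \<Rightarrow> bool) \<Rightarrow> 'a set set \<Rightarrow> 'a set set" where
  "GamP F adj S = (\<Union>f\<in>S. insert f (Gam F adj f))"

definition indep :: "('a set \<Rightarrow> 'a set \<Rightarrow> bool) \<Rightarrow> 'a set set \<Rightarrow> bool" where
  "indep adj S = (\<forall>f\<in>S. \<forall>g\<in>S. f \<noteq> g \<longrightarrow> \<not> adj f g)"

definition IndS :: "('a set \<Rightarrow> 'a set \<Rightarrow> bool) \<Rightarrow> 'a set set \<Rightarrow> 'a set set set" where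
  "IndS adj S = {I. I \<subseteq> S \<and> indep adj I}"

definition setting :: "'a set \<Rightarrow> 'a set set \<Rightarrow> ('a set \<Rightarrow> 'a \<Rightarrow> 'a \<Rightarrow> real)
    \<Rightarrow> ('a \<Rightarrow> real) \<Rightarrow> ('a set \<Rightarrow> 'a set \<Rightarrow> bool) \<Rightarrow> bool" where
  "setting Omega F rho omega adj \<longleftrightarrow>
     finite Omega \<and> finite F \<and>
     (\<forall>f\<in>F. f \<noteq> {} \<and> f \<subseteq> Omega) \<and>
     (\<forall>s\<in>Omega. \<forall>f\<in>F. s \<in> f \<longrightarrow>
         (\<forall>s'\<in>Omega. rho f s s' \<ge> 0) \<and> (\<Sum>s'\<in>Omega. rho f s s') = 1) \<and>
     (\<forall>s\<in>Omega. omega s > 0) \<and> (\<Sum>s\<in>Omega. omega s) = 1 \<and>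
     (\<forall>f\<in>F. \<forall>g\<in>F. adj f g \<longrightarrow> adj g f) \<and>
     (\<forall>s\<in>Omega. \<forall>f\<in>F. s \<in> f \<longrightarrow>
         (\<forall>s'\<in>Asupp Omega rho f s. Fs F s' \<subseteq> (Fs F s - {f}) \<union> Gam F adj f))"

(* walk with states ss = [s_1,...,s_{t+1}] and word ws = [w_1,...,w_t] *)
definition walk :: "'a set \<Rightarrow> 'a set set \<Rightarrow> ('a set \<Rightarrow> 'a \<Rightarrow> 'a \<Rightarrow> real)
    \<Rightarrow> 'a list \<Rightarrow> 'a set list \<Rightarrow> bool" where
  "walk Omega F rho ss ws \<longleftrightarrow>
     length ss = Suc (length ws) \<and> ss ! 0 \<in> Omega \<and>
     (\<forall>i < length ws. ws ! i \<in> F \<and> ss ! i \<in> ws ! i \<and>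
        ss ! Suc i \<in> Asupp Omega rho (ws ! i) (ss ! i))"

definition stable_partition :: "'a set set \<Rightarrow> ('a set \<Rightarrow> 'a set \<Rightarrow> bool) \<Rightarrow> 'a set list list \<Rightarrow> bool" where
  "stable_partition F adj Ws \<longleftrightarrow>
     Ws \<noteq> [] \<and>
     (\<forall>w\<in>set Ws. w \<noteq> [] \<and> distinct w \<and> set w \<in> IndS adj F) \<and>
     (\<forall>r. Suc r < length Ws \<longrightarrow> set (Ws ! Suc r) \<subseteq> GamP F adj (set (Ws ! r)))"

(* perm is a bijection F -> {0..<|F|}; f \<prec>_pi g iff perm f < perm g *)
definition pi_stable_word :: "'a set set \<Rightarrow> ('a set \<Rightarrow> 'a set \<Rightarrow> bool) \<Rightarrow> ('a set \<Rightarrow> nat)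
    \<Rightarrow> 'a set list \<Rightarrow> bool" where
  "pi_stable_word F adj perm W \<longleftrightarrow>
     W = [] \<or>
     (\<exists>Ws. stable_partition F adj Ws \<and> concat Ws = W \<and>
        (\<forall>w\<in>set Ws. sorted_wrt (\<lambda>f g. perm f < perm g) w))"

definition RW :: "'a set set \<Rightarrow> ('a set \<Rightarrow> 'a set \<Rightarrow> bool) \<Rightarrow> 'a set list \<Rightarrow> 'a set set" where
  "RW F adj W = (if W = [] then {}
      else set (hd (THE Ws. stable_partition F adj Ws \<and> concat Ws = W)))"

definition Stab :: "'a set \<Rightarrow> 'a set set \<Rightarrow> ('a set \<Rightarrow> 'a \<Rightarrow> 'a \<Rightarrow> real)
    \<Rightarrow> ('a set \<Rightarrow> 'a set \<Rightarrow> bool) \<Rightarrow> ('a set \<Rightarrow> nat) \<Rightarrow> 'a set list set" where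
  "Stab Omega F rho adj perm = {W. pi_stable_word F adj perm W \<and>
      (\<exists>ss. walk Omega F rho ss W \<or> walk Omega F rho ss (rev W))}"

definition StabRt :: "'a set \<Rightarrow> 'a set set \<Rightarrow> ('a set \<Rightarrow> 'a \<Rightarrow> 'a \<Rightarrow> real)
    \<Rightarrow> ('a set \<Rightarrow> 'a set \<Rightarrow> bool) \<Rightarrow> ('a set \<Rightarrow> nat) \<Rightarrow> 'a set set \<Rightarrow> nat \<Rightarrow> 'a set list set" where
  "StabRt Omega F rho adj perm R t =
     {W \<in> Stab Omega F rho adj perm. RW F adj W = R \<and> length W \<ge> t}"

definition lamW :: "('a set \<Rightarrow> real) \<Rightarrow> 'a set list \<Rightarrow> real" where
  "lamW lam W = prod_list (map lam W)"

definition qS :: "'a set set \<Rightarrow> ('a set \<Rightarrow> 'a set \<Rightarrow> bool) \<Rightarrow> ('a set \<Rightarrow> real) \<Rightarrow> 'a set set \<Rightarrow> real" where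
  "qS F adj p S = (\<Sum>I \<in> {I \<in> IndS adj F. S \<subseteq> I}.
       (-1) ^ (card I - card S) * (\<Prod>f\<in>I. p f))"

definition charge_bound :: "'a set \<Rightarrow> 'a set set \<Rightarrow> ('a set \<Rightarrow> 'a \<Rightarrow> 'a \<Rightarrow> real)
    \<Rightarrow> ('a \<Rightarrow> real) \<Rightarrow> ('a set \<Rightarrow> real) \<Rightarrow> bool" where
  "charge_bound Omega F rho omega lam \<longleftrightarrow>
     (\<forall>f\<in>F. \<forall>s'\<in>Omega.
        lam f \<ge> (\<Sum>s \<in> {s \<in> f. s' \<in> Asupp Omega rho f s}. rho f s s' * omega s / omega s'))"

definition shearer :: "'a set \<Rightarrow> 'a set set \<Rightarrow> ('a set \<Rightarrow> 'a \<Rightarrow> 'a \<Rightarrow> real)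
    \<Rightarrow> ('a \<Rightarrow> real) \<Rightarrow> ('a set \<Rightarrow> 'a set \<Rightarrow> bool)
    \<Rightarrow> ('a set \<Rightarrow> real) \<Rightarrow> ('a set \<Rightarrow> real) \<Rightarrow> real \<Rightarrow> bool" where
  "shearer Omega F rho omega adj p lam theta \<longleftrightarrow>
     (\<forall>S. S \<subseteq> F \<longrightarrow> qS F adj p S \<ge> 0) \<and> qS F adj p {} > 0 \<and>
     charge_bound Omega F rho omega lam \<and>
     0 < theta \<and> theta < 1 \<and> (\<forall>f\<in>F. lam f \<le> theta * p f)"

end

theory Submission
  imports Defs
begin


lemma setting_D:
  assumes "setting Omega F rho omega adj"
  shows "finite Omega" "finite F" "\<forall>f\<in>F. f \<noteq> {} \<and> f \<subseteq> Omega"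
    "\<forall>s\<in>Omega. \<forall>f\<in>F. s \<in> f \<longrightarrow>
         (\<forall>s'\<in>Omega. rho f s s' \<ge> 0) \<and> (\<Sum>s'\<in>Omega. rho f s s') = 1"
    "\<forall>s\<in>Omega. omega s > 0"
    "\<forall>f\<in>F. \<forall>g\<in>F. adj f g \<longrightarrow> adj g f"
    "\<forall>s\<in>Omega. \<forall>f\<in>F. s \<in> f \<longrightarrow>
         (\<forall>s'\<in>Asupp Omega rho f s. Fs F s' \<subseteq> (Fs F s - {f}) \<union> Gam F adj f)"
  using assms unfolding setting_def
  by - ((elim conjE, assumption), (insert assms, unfold setting_def)?)+

lemma walk_D:
  assumes "walk Omega F rho ss ws" "i < length ws"
  shows "ws ! i \<in> F" "ss ! i \<in> ws ! i" "ss ! Suc i \<in> Asupp Omega rho (ws ! i) (ss ! i)"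
  using assms unfolding walk_def by simp_all

lemma setting_step:
  assumes "setting Omega F rho omega adj" "walk Omega F rho ss ws" "k < length ws"
  shows "Fs F (ss!Suc k) \<subseteq> (Fs F (ss!k) - {ws!k}) \<union> Gam F adj (ws!k)"
proof -
  have w: "ws!k \<in> F" "ss!k \<in> ws!k" "ss!Suc k \<in> Asupp Omega rho (ws!k) (ss!k)"
    using walk_D[OF assms(2,3)] by simp_all
  note FO = setting_D(3)[OF assms(1)] and ST = setting_D(7)[OF assms(1)]
  have "ss!k \<in> Omega" using w FO by blast
  then show ?thesis using w ST by blast
qed

lemma walk_reint:
  assumes S: "setting Omega F rho omega adj" and W: "walk Omega F rho ss ws"
    and ij: "i < j" "j < length ws" and fi: "ws!i = f" and fj: "ws!j = f"
  shows "\<exists>k. i \<le> k \<and> k < j \<and> f \<in> Gam F adj (ws!k)"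
proof -
  have claim: "\<forall>d. i + Suc d \<le> length ws \<longrightarrow> f \<in> Fs F (ss!(i + Suc d)) \<longrightarrow>
      (\<exists>k. i \<le> k \<and> k < i + Suc d \<and> f \<in> Gam F adj (ws!k))"
  proof
    fix d show "i + Suc d \<le> length ws \<longrightarrow> f \<in> Fs F (ss!(i + Suc d)) \<longrightarrow>
      (\<exists>k. i \<le> k \<and> k < i + Suc d \<and> f \<in> Gam F adj (ws!k))"
    proof (induction d)
      case 0
      show ?case
      proof (intro impI)
        assume a: "i + Suc 0 \<le> length ws" "f \<in> Fs F (ss!(i + Suc 0))"
        have "Fs F (ss!Suc i) \<subseteq> (Fs F (ss!i) - {ws!i}) \<union> Gam F adj (ws!i)"
          using setting_step[OF S W] a by auto
        then have "f \<in> Gam F adj (ws!i)" using a fi by auto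
        then show "\<exists>k. i \<le> k \<and> k < i + Suc 0 \<and> f \<in> Gam F adj (ws!k)" by auto
      qed
    next
      case (Suc d)
      show ?case
      proof (intro impI)
        assume a: "i + Suc (Suc d) \<le> length ws" "f \<in> Fs F (ss!(i + Suc (Suc d)))"
        have "Fs F (ss!Suc (i + Suc d)) \<subseteq> (Fs F (ss!(i + Suc d)) - {ws!(i + Suc d)}) \<union> Gam F adj (ws!(i + Suc d))"
          using setting_step[OF S W, of "i + Suc d"] a by auto
        then have "f \<in> Fs F (ss!(i + Suc d)) \<or> f \<in> Gam F adj (ws!(i + Suc d))" using a by auto
        then show "\<exists>k. i \<le> k \<and> k < i + Suc (Suc d) \<and> f \<in> Gam F adj (ws!k)"
        proof
          assume "f \<in> Fs F (ss!(i + Suc d))"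
          moreover have "i + Suc d \<le> length ws" using a(1) by simp
          ultimately obtain k where "i \<le> k \<and> k < i + Suc d \<and> f \<in> Gam F adj (ws!k)"
            using Suc.IH by blast
          then show ?thesis by (intro exI[of _ k]) auto
        next
          assume "f \<in> Gam F adj (ws!(i + Suc d))"
          then show ?thesis by (intro exI[of _ "i + Suc d"]) auto
        qed
      qed
    qed
  qed
  define d where "d = j - Suc i"
  have d: "j = i + Suc d" using ij unfolding d_def by arith
  have "ws!j \<in> F" "ss!j \<in> ws!j" using walk_D[OF W ij(2)] by simp_all
  then have fj0: "f \<in> Fs F (ss!j)" using fj unfolding Fs_def by simp
  have le: "i + Suc d \<le> length ws" using d ij by simp
  have fj': "f \<in> Fs F (ss!(i + Suc d))" using fj0 d by simp
  obtain k where "i \<le> k \<and> k < i + Suc d \<and> f \<in> Gam F adj (ws!k)"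
    using claim[rule_format, OF le fj'] by blast
  then show ?thesis using d by auto
qed

lemma walk_reint_list:
  assumes S: "setting Omega F rho omega adj" and W: "walk Omega F rho ss (xs @ f # ys @ f # zs)"
  shows "\<exists>g \<in> insert f (set ys). f \<in> Gam F adj g"
proof -
  let ?ws = "xs @ f # ys @ f # zs"
  have i: "?ws ! length xs = f" by simp
  have j: "?ws ! (length xs + Suc (length ys)) = f" by (simp add: nth_append)
  obtain k where k: "length xs \<le> k" "k < length xs + Suc (length ys)" "f \<in> Gam F adj (?ws!k)"
    using walk_reint[OF S W, of "length xs" "length xs + Suc (length ys)" f] i j by auto
  define m where "m = k - length xs"
  have m: "k = length xs + m" "m \<le> length ys" using k unfolding m_def by arith+
  have "?ws!k = (f # ys @ f # zs) ! m" using m(1) by (simp add: nth_append_length_plus)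
  also have "\<dots> = ((f # ys) @ (f # zs)) ! m" by simp
  also have "\<dots> = (f # ys) ! m" using m(2) by (subst nth_append) simp
  finally have "?ws!k = (f # ys) ! m" .
  moreover have "(f # ys) ! m \<in> set (f # ys)" using m(2) by (intro nth_mem) simp
  ultimately show ?thesis using k(3) by auto
qed

lemma walk_reint_any:
  assumes S: "setting Omega F rho omega adj"
    and W: "walk Omega F rho ss (xs @ f # ys @ f # zs) \<or> walk Omega F rho ss (rev (xs @ f # ys @ f # zs))"
  shows "\<exists>g \<in> insert f (set ys). f \<in> Gam F adj g"
  using W
proof
  assume "walk Omega F rho ss (rev (xs @ f # ys @ f # zs))"
  then have "walk Omega F rho ss (rev zs @ f # rev ys @ f # rev xs)" by simp
  then have "\<exists>g \<in> insert f (set (rev ys)). f \<in> Gam F adj g" by (rule walk_reint_list[OF S])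
  then show ?thesis by simp
next
  assume "walk Omega F rho ss (xs @ f # ys @ f # zs)"
  then show ?thesis by (rule walk_reint_list[OF S])
qed



definition GamS :: "'a set set \<Rightarrow> ('a set \<Rightarrow> 'a set \<Rightarrow> bool) \<Rightarrow> 'a set set \<Rightarrow> 'a set set" where
  "GamS F adj S = (\<Union>f\<in>S. Gam F adj f)"

lemma sp_blocks:
  assumes "stable_partition F adj Ws" "w \<in> set Ws"
  shows "w \<noteq> []" "distinct w" "set w \<in> IndS adj F"
  using assms unfolding stable_partition_def by blast+

lemma sp_tl:
  assumes "stable_partition F adj (a # rest)" "rest \<noteq> []"
  shows "stable_partition F adj rest"
proof -
  have "\<forall>r. Suc r < length (a # rest) \<longrightarrow> set ((a # rest) ! Suc r) \<subseteq> GamP F adj (set ((a # rest) ! r))"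
    using assms(1) unfolding stable_partition_def by blast
  then have "\<forall>r. Suc r < length rest \<longrightarrow> set (rest ! Suc r) \<subseteq> GamP F adj (set (rest ! r))"
    by (metis Suc_less_eq length_Cons nth_Cons_Suc)
  moreover have "\<forall>w\<in>set rest. w \<noteq> [] \<and> distinct w \<and> set w \<in> IndS adj F"
    using sp_blocks[OF assms(1)] by simp
  ultimately show ?thesis using assms(2) unfolding stable_partition_def by blast
qed

lemma sp_hd_sub:
  assumes "stable_partition F adj (a # b # rest)"
  shows "set b \<subseteq> GamP F adj (set a)"
proof -
  have "\<forall>r. Suc r < length (a # b # rest) \<longrightarrow> set ((a # b # rest) ! Suc r) \<subseteq> GamP F adj (set ((a # b # rest) ! r))"
    using assms(1) unfolding stable_partition_def by blast
  from this[rule_format, of 0] show ?thesis by simp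
qed

lemma sp_first_aux:
  assumes s1: "stable_partition F adj (a # r1)" and s2: "stable_partition F adj (b # r2)"
    and eq: "a @ concat r1 = b @ concat r2" and lt: "length a < length b"
  shows False
proof -
  have t: "take (length a) b = a" using arg_cong[OF eq, of "take (length a)"] lt by simp
  have b: "b = a @ drop (length a) b" using t append_take_drop_id[of "length a" b] by simp
  have c: "concat r1 = drop (length a) b @ concat r2"
    using arg_cong[OF eq, of "drop (length a)"] lt by simp
  obtain g b' where gb: "drop (length a) b = g # b'" using lt by (cases "drop (length a) b") auto
  have "r1 \<noteq> []" using c gb by auto
  then obtain c1 r1' where r1: "r1 = c1 # r1'" by (cases r1) auto
  have "c1 \<noteq> []" using sp_blocks(1)[OF s1, of c1] r1 by simp
  then have "hd c1 = g" using c gb r1 by (cases c1) auto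
  then have g1: "g \<in> set c1" using \<open>c1 \<noteq> []\<close> hd_in_set by metis
  have "set c1 \<subseteq> GamP F adj (set a)" using sp_hd_sub[of F adj a c1 r1'] s1 r1 by simp
  with g1 obtain f where f: "f \<in> set a" "g = f \<or> g \<in> Gam F adj f" unfolding GamP_def by blast
  have bb: "b = a @ g # b'" using b gb by simp
  have "distinct b" "set b \<in> IndS adj F" using sp_blocks[OF s2, of b] by auto
  then have "g \<noteq> f" "\<not> adj f g" using bb f(1) unfolding IndS_def indep_def by auto
  then show False using f(2) unfolding Gam_def by auto
qed

lemma sp_first:
  assumes s1: "stable_partition F adj (a # r1)" and s2: "stable_partition F adj (b # r2)"
    and eq: "a @ concat r1 = b @ concat r2"
  shows "a = b"
proof -
  have "\<not> length a < length b" using sp_first_aux[OF s1 s2 eq] by blast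
  moreover have "\<not> length b < length a" using sp_first_aux[OF s2 s1 eq[symmetric]] by blast
  ultimately have "length a = length b" by simp
  then show ?thesis using eq by (simp add: append_eq_append_conv)
qed

lemma concat_nonempty_blocks:
  assumes "\<forall>w\<in>set Ws. w \<noteq> []" "concat Ws = []"
  shows "Ws = []"
  using assms by (cases Ws) auto

lemma sp_unique:
  "stable_partition F adj Ws1 \<Longrightarrow> stable_partition F adj Ws2 \<Longrightarrow> concat Ws1 = concat Ws2 \<Longrightarrow> Ws1 = Ws2"
proof (induction Ws1 arbitrary: Ws2)
  case Nil
  then show ?case unfolding stable_partition_def by simp
next
  case (Cons a r1)
  obtain b r2 where W2: "Ws2 = b # r2" using Cons.prems(2) unfolding stable_partition_def
    by (cases Ws2) auto
  have ab: "a = b" using sp_first[of F adj a r1 b r2] Cons.prems W2 by simp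
  then have cc: "concat r1 = concat r2" using Cons.prems(3) W2 by simp
  show ?case
  proof (cases "r1 = []")
    case True
    then have "concat r2 = []" using cc by simp
    moreover have "\<forall>w\<in>set r2. w \<noteq> []" using sp_blocks(1)[OF Cons.prems(2)] W2 by simp
    ultimately have "r2 = []" using concat_nonempty_blocks by blast
    then show ?thesis using True ab W2 by simp
  next
    case False
    have "\<forall>w\<in>set r1. w \<noteq> []" using sp_blocks(1)[OF Cons.prems(1)] by simp
    then have "concat r1 \<noteq> []" using False by (cases r1) auto
    then have "r2 \<noteq> []" using cc by auto
    have "stable_partition F adj r1" using sp_tl Cons.prems(1) False by blast
    moreover have "stable_partition F adj r2" using sp_tl Cons.prems(2) W2 \<open>r2 \<noteq> []\<close> by blast
    ultimately have "r1 = r2" using Cons.IH cc by blast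
    then show ?thesis using ab W2 by simp
  qed
qed

lemma concat_split2:
  assumes "Suc r < length Ws"
  shows "concat Ws = concat (take r Ws) @ Ws ! r @ Ws ! Suc r @ concat (drop (Suc (Suc r)) Ws)"
proof -
  have "Ws = take r Ws @ Ws ! r # drop (Suc r) Ws" using assms by (simp add: id_take_nth_drop)
  moreover have "drop (Suc r) Ws = Ws ! Suc r # drop (Suc (Suc r)) Ws" using assms
    by (simp add: Cons_nth_drop_Suc)
  ultimately have "Ws = take r Ws @ Ws ! r # Ws ! Suc r # drop (Suc (Suc r)) Ws" by simp
  then have "concat Ws = concat (take r Ws @ Ws ! r # Ws ! Suc r # drop (Suc (Suc r)) Ws)" by simp
  then show ?thesis by simp
qed

lemma walk_sp_gam:
  assumes S: "setting Omega F rho omega adj" and sp: "stable_partition F adj Ws"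
    and W: "walk Omega F rho ss (concat Ws) \<or> walk Omega F rho ss (rev (concat Ws))"
    and r: "Suc r < length Ws"
  shows "set (Ws ! Suc r) \<subseteq> GamS F adj (set (Ws ! r))"
proof
  fix g assume g: "g \<in> set (Ws ! Suc r)"
  have "\<forall>r. Suc r < length Ws \<longrightarrow> set (Ws ! Suc r) \<subseteq> GamP F adj (set (Ws ! r))"
    using sp unfolding stable_partition_def by blast
  then have "g \<in> GamP F adj (set (Ws ! r))" using r g by blast
  then obtain f where f: "f \<in> set (Ws ! r)" "g = f \<or> g \<in> Gam F adj f" unfolding GamP_def by blast
  show "g \<in> GamS F adj (set (Ws ! r))"
  proof (cases "g \<in> Gam F adj f")
    case True
    then show ?thesis using f unfolding GamS_def by blast
  next
    case False
    then have gr: "g \<in> set (Ws ! r)" using f by auto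
    have inr: "Ws ! r \<in> set Ws" "Ws ! Suc r \<in> set Ws" using r by auto
    obtain a b where ab: "Ws ! r = a @ g # b" using gr by (meson split_list)
    obtain c d where cd: "Ws ! Suc r = c @ g # d" using g by (meson split_list)
    have "concat Ws = (concat (take r Ws) @ a) @ g # (b @ c) @ g # (d @ concat (drop (Suc (Suc r)) Ws))"
      using concat_split2[OF r] ab cd by simp
    then obtain h where h: "h \<in> insert g (set (b @ c))" "g \<in> Gam F adj h"
      using walk_reint_any[OF S, of ss "concat (take r Ws) @ a" g "b @ c" "d @ concat (drop (Suc (Suc r)) Ws)"] W
      by metis
    have d1: "distinct (Ws ! r)" "set (Ws ! r) \<in> IndS adj F" using sp_blocks[OF sp inr(1)] by auto
    have d2: "distinct (Ws ! Suc r)" "set (Ws ! Suc r) \<in> IndS adj F" using sp_blocks[OF sp inr(2)] by auto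
    have adjhg: "adj h g" using h(2) unfolding Gam_def by simp
    show ?thesis
    proof (cases "h = g")
      case True
      then show ?thesis using h(2) gr unfolding GamS_def by blast
    next
      case False
      then have "h \<in> set b \<or> h \<in> set c" using h(1) by auto
      then show ?thesis
      proof
        assume hb: "h \<in> set b"
        then have "h \<in> set (Ws ! r)" using ab by simp
        then have "\<not> adj h g" using d1(2) gr False unfolding IndS_def indep_def by blast
        then show ?thesis using adjhg by simp
      next
        assume hc: "h \<in> set c"
        then have "h \<in> set (Ws ! Suc r)" using cd by simp
        then have "\<not> adj h g" using d2(2) g False unfolding IndS_def indep_def by blast
        then show ?thesis using adjhg by simp
      qed
    qed
  qed
qed



fun gseq :: "'a set set \<Rightarrow> ('a set \<Rightarrow> 'a set \<Rightarrow> bool) \<Rightarrow> 'a set set \<Rightarrow> 'a set set list \<Rightarrow> bool" where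
  "gseq F adj R [] = True"
| "gseq F adj R (J # Js) = (J \<noteq> {} \<and> J \<in> IndS adj F \<and> J \<subseteq> GamS F adj R \<and> gseq F adj J Js)"

definition wt :: "('a set \<Rightarrow> real) \<Rightarrow> 'a set set list \<Rightarrow> real" where
  "wt psi Is = prod_list (map (\<lambda>I. \<Prod>f\<in>I. psi f) Is)"

lemma wt_Nil[simp]: "wt psi [] = 1" and wt_Cons[simp]: "wt psi (I # Is) = (\<Prod>f\<in>I. psi f) * wt psi Is"
  unfolding wt_def by simp_all

lemma GamS_sub: "GamS F adj R \<subseteq> F"
  unfolding GamS_def Gam_def by auto

lemma IndS_sub: "A \<subseteq> B \<Longrightarrow> IndS adj A \<subseteq> IndS adj B"
  unfolding IndS_def by auto

lemma IndS_fin: "finite A \<Longrightarrow> finite (IndS adj A)"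
  unfolding IndS_def by (rule finite_subset[of _ "Pow A"]) auto

lemma empty_IndS: "{} \<in> IndS adj A"
  unfolding IndS_def indep_def by auto

lemma IndS_subF: "I \<in> IndS adj F \<Longrightarrow> I \<subseteq> F"
  unfolding IndS_def by auto

lemma pw_nonneg: "\<forall>f\<in>F. psi f \<ge> (0::real) \<Longrightarrow> I \<subseteq> F \<Longrightarrow> (\<Prod>f\<in>I. psi f) \<ge> 0"
  by (rule prod_nonneg) auto

lemma wt_nonneg: "\<forall>f\<in>F. psi f \<ge> 0 \<Longrightarrow> gseq F adj R Is \<Longrightarrow> wt psi Is \<ge> 0"
proof (induction Is arbitrary: R)
  case Nil then show ?case by simp
next
  case (Cons J Js)
  have "J \<subseteq> F" using Cons.prems(2) GamS_sub[of F adj R] by auto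
  then have "(\<Prod>f\<in>J. psi f) \<ge> 0" using pw_nonneg Cons.prems(1) by blast
  moreover have "wt psi Js \<ge> 0" using Cons.IH[of J] Cons.prems by simp
  ultimately show ?case by simp
qed

lemma main_bound:
  fixes psi :: "'a set \<Rightarrow> real" and M :: "'a set set \<Rightarrow> real"
  assumes fin: "finite F" and psi0: "\<forall>f\<in>F. psi f \<ge> 0"
    and M0: "\<forall>J\<in>IndS adj F. M J \<ge> 0" and M1: "M {} = 1"
    and cond: "\<forall>R\<in>IndS adj F. (\<Prod>f\<in>R. psi f) * (\<Sum>J\<in>IndS adj (GamS F adj R). M J) \<le> M R"
  shows "R \<in> IndS adj F \<Longrightarrow> finite B \<Longrightarrow> \<forall>Is\<in>B. gseq F adj R Is \<and> length Is \<le> n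
     \<Longrightarrow> (\<Prod>f\<in>R. psi f) * (\<Sum>Is\<in>B. wt psi Is) \<le> M R"
proof (induction n arbitrary: R B rule: less_induct)
  case (less n R B)
  let ?B0 = "B - {[]}"
  let ?Ind = "IndS adj (GamS F adj R)"
  have finInd: "finite ?Ind" using IndS_fin[OF finite_subset[OF GamS_sub fin]] .
  have IndF: "?Ind \<subseteq> IndS adj F" using IndS_sub[OF GamS_sub] .
  have s1: "(\<Sum>Is\<in>B. wt psi Is) = (\<Sum>Is\<in>B \<inter> {[]}. wt psi Is) + (\<Sum>Is\<in>?B0. wt psi Is)"
    using less.prems(2) by (metis Diff_eq Int_commute sum.Int_Diff)
  have s2: "(\<Sum>Is\<in>B \<inter> {[]}. wt psi Is) \<le> 1"
  proof (cases "[] \<in> B")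
    case True
    then have "B \<inter> {[]} = {[]}" by auto
    then show ?thesis by simp
  next
    case False
    then have "B \<inter> {[]} = {}" by auto
    then show ?thesis by simp
  qed
  have s3: "(\<Sum>Is\<in>?B0. wt psi Is) =
      (\<Sum>J\<in>hd ` ?B0. \<Sum>Is\<in>{Is\<in>?B0. hd Is = J}. wt psi Is)"
    using less.prems(2) by (intro sum.image_gen) auto
  have s4: "(\<Sum>Is\<in>{Is\<in>?B0. hd Is = J}. wt psi Is) \<le> M J" if J: "J \<in> hd ` ?B0" for J
  proof -
    let ?C = "{Is\<in>?B0. hd Is = J}"
    have Cform: "\<exists>Js. Is = J # Js" if "Is \<in> ?C" for Is using that by (cases Is) auto
    have Cwt: "wt psi Is = (\<Prod>f\<in>J. psi f) * wt psi (tl Is)" if IC: "Is \<in> ?C" for Is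
    proof -
      obtain Js where "Is = J # Js" using Cform[OF IC] by blast
      then show ?thesis by simp
    qed
    have "(\<Sum>Is\<in>?C. wt psi Is) = (\<Sum>Is\<in>?C. (\<Prod>f\<in>J. psi f) * wt psi (tl Is))"
      by (rule sum.cong[OF refl]) (rule Cwt)
    also have "\<dots> = (\<Prod>f\<in>J. psi f) * (\<Sum>Is\<in>?C. wt psi (tl Is))"
      by (simp add: sum_distrib_left)
    also have "(\<Sum>Is\<in>?C. wt psi (tl Is)) = (\<Sum>Ks\<in>tl ` ?C. wt psi Ks)"
    proof -
      have "inj_on tl ?C"
      proof (rule inj_onI)
        fix x y assume xy: "x \<in> ?C" "y \<in> ?C" "tl x = tl y"
        obtain Jx where "x = J # Jx" using Cform[OF xy(1)] by blast
        moreover obtain Jy where "y = J # Jy" using Cform[OF xy(2)] by blast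
        ultimately show "x = y" using xy(3) by simp
      qed
      then show ?thesis by (simp add: sum.reindex)
    qed
    also have "(\<Prod>f\<in>J. psi f) * (\<Sum>Ks\<in>tl ` ?C. wt psi Ks) \<le> M J"
    proof -
      obtain Is0 where Is0: "Is0 \<in> ?B0" "hd Is0 = J" using J by auto
      then have Is0C: "Is0 \<in> ?C" by simp
      obtain Js0 where Js0: "Is0 = J # Js0" using Cform[OF Is0C] by blast
      have g0: "gseq F adj R Is0" "length Is0 \<le> n" using Is0 less.prems(3) by auto
      then have JI: "J \<in> IndS adj F" using Js0 by simp
      have npos: "n - 1 < n" using g0(2) Js0 by simp
      have finC: "finite (tl ` ?C)" using less.prems(2) by simp
      have "\<forall>Ks\<in>tl ` ?C. gseq F adj J Ks \<and> length Ks \<le> n - 1"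
      proof
        fix Ks assume "Ks \<in> tl ` ?C"
        then obtain Is where Is: "Is \<in> ?C" "Ks = tl Is" by auto
        obtain Js where Js: "Is = J # Js" using Cform[OF Is(1)] by blast
        have "gseq F adj R Is" "length Is \<le> n" using Is less.prems(3) by auto
        then show "gseq F adj J Ks \<and> length Ks \<le> n - 1" using Js Is(2) by simp
      qed
      then show ?thesis using less.IH[OF npos JI finC] by blast
    qed
    finally show ?thesis .
  qed
  have s5: "hd ` ?B0 \<subseteq> ?Ind - {{}}"
  proof
    fix J assume "J \<in> hd ` ?B0"
    then obtain Is where Is: "Is \<in> ?B0" "J = hd Is" by auto
    then obtain Js where Js: "Is = J # Js" by (cases Is) auto
    have "gseq F adj R Is" using Is less.prems(3) by auto
    then have "J \<noteq> {} \<and> J \<in> IndS adj F \<and> J \<subseteq> GamS F adj R" using Js by simp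
    then show "J \<in> ?Ind - {{}}" unfolding IndS_def by auto
  qed
  have MInd: "\<forall>J\<in>?Ind. M J \<ge> 0" using M0 IndF by blast
  have "(\<Sum>Is\<in>?B0. wt psi Is) \<le> (\<Sum>J\<in>hd ` ?B0. M J)"
    unfolding s3 by (rule sum_mono) (rule s4)
  also have "\<dots> \<le> (\<Sum>J\<in>?Ind - {{}}. M J)"
    using s5 finInd MInd by (intro sum_mono2) auto
  finally have s6: "(\<Sum>Is\<in>B. wt psi Is) \<le> 1 + (\<Sum>J\<in>?Ind - {{}}. M J)" using s1 s2 by linarith
  have "(\<Sum>J\<in>?Ind. M J) = M {} + (\<Sum>J\<in>?Ind - {{}}. M J)"
    using finInd empty_IndS by (intro sum.remove) auto
  then have s7: "(\<Sum>Is\<in>B. wt psi Is) \<le> (\<Sum>J\<in>?Ind. M J)" using s6 M1 by simp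
  have "(\<Prod>f\<in>R. psi f) \<ge> 0" using pw_nonneg[OF psi0 IndS_subF[OF less.prems(1)]] .
  then have "(\<Prod>f\<in>R. psi f) * (\<Sum>Is\<in>B. wt psi Is) \<le> (\<Prod>f\<in>R. psi f) * (\<Sum>J\<in>?Ind. M J)"
    using s7 by (rule mult_left_mono[rotated])
  also have "\<dots> \<le> M R" using cond less.prems(1) by blast
  finally show ?case .
qed



lemma sum_Ind_union:
  fixes m :: "'a set \<Rightarrow> real"
  assumes fA: "finite A" and fB: "finite B" and m0: "\<forall>g\<in>A \<union> B. m g \<ge> 0"
  shows "(\<Sum>J\<in>IndS adj (A \<union> B). \<Prod>g\<in>J. m g)
       \<le> (\<Sum>S\<in>IndS adj A. \<Prod>g\<in>S. m g) * (\<Sum>T\<in>IndS adj B. \<Prod>g\<in>T. m g)"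
proof -
  let ?mu = "\<lambda>J. \<Prod>g\<in>J. m g"
  let ?phi = "\<lambda>J. (J \<inter> A, J - A)"
  have fAB: "finite (IndS adj (A \<union> B))" using IndS_fin fA fB by blast
  have fA': "finite (IndS adj A)" and fB': "finite (IndS adj B)" using IndS_fin fA fB by blast+
  have inj: "inj_on ?phi (IndS adj (A \<union> B))"
  proof (rule inj_onI)
    fix x y assume "x \<in> IndS adj (A \<union> B)" "y \<in> IndS adj (A \<union> B)" "?phi x = ?phi y"
    then have "x \<inter> A = y \<inter> A" "x - A = y - A" by auto
    then show "x = y" by blast
  qed
  have img: "?phi ` IndS adj (A \<union> B) \<subseteq> IndS adj A \<times> IndS adj B"
    unfolding IndS_def indep_def by auto
  have mu_split: "?mu J = ?mu (J \<inter> A) * ?mu (J - A)" if "J \<in> IndS adj (A \<union> B)" for J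
  proof -
    have "J \<subseteq> A \<union> B" using that unfolding IndS_def by simp
    then have fJ: "finite J" using fA fB by (meson finite_UnI finite_subset)
    have "?mu J = ?mu ((J \<inter> A) \<union> (J - A))" by (simp only: Int_Diff_Un)
    also have "\<dots> = ?mu (J \<inter> A) * ?mu (J - A)"
      using fJ by (intro prod.union_disjoint) auto
    finally show ?thesis .
  qed
  have nn: "\<forall>x\<in>IndS adj A \<times> IndS adj B. ?mu (fst x) * ?mu (snd x) \<ge> 0"
  proof
    fix x assume "x \<in> IndS adj A \<times> IndS adj B"
    then have "fst x \<subseteq> A \<union> B" "snd x \<subseteq> A \<union> B" unfolding IndS_def by auto
    then have "?mu (fst x) \<ge> 0" "?mu (snd x) \<ge> 0" using m0 by (auto intro!: prod_nonneg)
    then show "?mu (fst x) * ?mu (snd x) \<ge> 0" by simp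
  qed
  have "(\<Sum>J\<in>IndS adj (A \<union> B). ?mu J) = (\<Sum>J\<in>IndS adj (A \<union> B). ?mu (fst (?phi J)) * ?mu (snd (?phi J)))"
    using mu_split by (intro sum.cong) auto
  also have "\<dots> = (\<Sum>x\<in>?phi ` IndS adj (A \<union> B). ?mu (fst x) * ?mu (snd x))"
    using sum.reindex[OF inj, of "\<lambda>x. ?mu (fst x) * ?mu (snd x)"] by simp
  also have "\<dots> \<le> (\<Sum>x\<in>IndS adj A \<times> IndS adj B. ?mu (fst x) * ?mu (snd x))"
    using img nn fA' fB' by (intro sum_mono2) auto
  also have "\<dots> = (\<Sum>S\<in>IndS adj A. ?mu S) * (\<Sum>T\<in>IndS adj B. ?mu T)"
    by (simp add: sum_product sum.cartesian_product split_def)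
  finally show ?thesis .
qed

lemma GamS_empty: "GamS F adj {} = {}" unfolding GamS_def by simp
lemma GamS_insert: "GamS F adj (insert f R) = Gam F adj f \<union> GamS F adj R" unfolding GamS_def by simp
lemma IndS_empty: "IndS adj {} = {{}}" unfolding IndS_def indep_def by auto

lemma sum_Ind_GamS:
  fixes m :: "'a set \<Rightarrow> real"
  assumes fF: "finite F" and m0: "\<forall>g\<in>F. m g \<ge> 0" and fR: "finite R"
  shows "(\<Sum>J\<in>IndS adj (GamS F adj R). \<Prod>g\<in>J. m g)
       \<le> (\<Prod>f\<in>R. \<Sum>S\<in>IndS adj (Gam F adj f). \<Prod>g\<in>S. m g)"
  using fR
proof (induction R rule: finite_induct)
  case empty
  then show ?case by (simp add: GamS_empty IndS_empty)
next
  case (insert f R)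
  have sG: "Gam F adj f \<subseteq> F" unfolding Gam_def by auto
  have fG: "finite (Gam F adj f)" using finite_subset[OF sG fF] .
  have fS: "finite (GamS F adj R)" using finite_subset[OF GamS_sub fF] .
  have m0': "\<forall>g\<in>Gam F adj f \<union> GamS F adj R. m g \<ge> 0" using m0 sG GamS_sub[of F adj R] by blast
  have nnA: "(\<Sum>S\<in>IndS adj (Gam F adj f). \<Prod>g\<in>S. m g) \<ge> 0"
    using m0 sG unfolding IndS_def by (intro sum_nonneg prod_nonneg) auto
  have "(\<Sum>J\<in>IndS adj (GamS F adj (insert f R)). \<Prod>g\<in>J. m g)
      \<le> (\<Sum>S\<in>IndS adj (Gam F adj f). \<Prod>g\<in>S. m g) * (\<Sum>T\<in>IndS adj (GamS F adj R). \<Prod>g\<in>T. m g)"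
    unfolding GamS_insert using sum_Ind_union[OF fG fS m0'] .
  also have "\<dots> \<le> (\<Sum>S\<in>IndS adj (Gam F adj f). \<Prod>g\<in>S. m g) * (\<Prod>f\<in>R. \<Sum>S\<in>IndS adj (Gam F adj f). \<Prod>g\<in>S. m g)"
    using insert.IH nnA by (rule mult_left_mono)
  also have "\<dots> = (\<Prod>f\<in>insert f R. \<Sum>S\<in>IndS adj (Gam F adj f). \<Prod>g\<in>S. m g)"
    using insert.hyps by simp
  finally show ?case .
qed

lemma case1_cond:
  fixes m psi :: "'a set \<Rightarrow> real"
  assumes fF: "finite F" and m0: "\<forall>f\<in>F. m f > 0" and psi0: "\<forall>f\<in>F. psi f \<ge> 0"
    and c: "\<forall>f\<in>F. psi f * (\<Sum>S\<in>IndS adj (Gam F adj f). \<Prod>g\<in>S. m g) \<le> m f"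
  shows "\<forall>R\<in>IndS adj F. (\<Prod>f\<in>R. psi f) * (\<Sum>J\<in>IndS adj (GamS F adj R). \<Prod>g\<in>J. m g) \<le> (\<Prod>g\<in>R. m g)"
proof
  fix R assume R: "R \<in> IndS adj F"
  then have RF: "R \<subseteq> F" by (rule IndS_subF)
  have fR: "finite R" using finite_subset[OF RF fF] .
  have m0': "\<forall>g\<in>F. m g \<ge> 0" using m0 by (simp add: less_imp_le)
  have nnS: "(\<Sum>S\<in>IndS adj (Gam F adj f). \<Prod>g\<in>S. m g) \<ge> 0" if "f \<in> F" for f
    using m0' unfolding IndS_def Gam_def by (intro sum_nonneg prod_nonneg) auto
  have pR: "(\<Prod>f\<in>R. psi f) \<ge> 0" using pw_nonneg[OF psi0 RF] .
  have "(\<Prod>f\<in>R. psi f) * (\<Sum>J\<in>IndS adj (GamS F adj R). \<Prod>g\<in>J. m g)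
      \<le> (\<Prod>f\<in>R. psi f) * (\<Prod>f\<in>R. \<Sum>S\<in>IndS adj (Gam F adj f). \<Prod>g\<in>S. m g)"
    using sum_Ind_GamS[OF fF m0' fR] pR by (rule mult_left_mono)
  also have "\<dots> = (\<Prod>f\<in>R. psi f * (\<Sum>S\<in>IndS adj (Gam F adj f). \<Prod>g\<in>S. m g))"
    by (simp add: prod.distrib)
  also have "\<dots> \<le> (\<Prod>f\<in>R. m f)"
  proof (rule prod_mono)
    fix f assume "f \<in> R"
    then have "f \<in> F" using RF by blast
    then show "0 \<le> psi f * (\<Sum>S\<in>IndS adj (Gam F adj f). \<Prod>g\<in>S. m g) \<and>
          psi f * (\<Sum>S\<in>IndS adj (Gam F adj f). \<Prod>g\<in>S. m g) \<le> m f"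
      using psi0 nnS c by simp
  qed
  finally show "(\<Prod>f\<in>R. psi f) * (\<Sum>J\<in>IndS adj (GamS F adj R). \<Prod>g\<in>J. m g) \<le> (\<Prod>g\<in>R. m g)" .
qed



lemma alt_sum_pow:
  assumes "finite X"
  shows "(\<Sum>J\<in>Pow X. (-1::real) ^ card J) = (if X = {} then 1 else 0)"
proof -
  have "(\<Prod>x\<in>X. (1::real) - 1) = (\<Sum>J\<in>Pow X. (-1) ^ card J * (\<Prod>x\<in>J. 1) * (\<Prod>x\<in>X-J. 1))"
    using prod_diff_conv_sum[OF assms, of "\<lambda>_. 1" "\<lambda>_. 1"] by simp
  then have "(\<Sum>J\<in>Pow X. (-1::real) ^ card J) = (\<Prod>x\<in>X. (1::real) - 1)" by simp
  also have "\<dots> = (if X = {} then 1 else 0)" using assms by (simp add: card_gt_0_iff)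
  finally show ?thesis .
qed

lemma neg1_pow_diff:
  assumes "b \<le> a"
  shows "(-1::real) ^ (a - b) = (-1) ^ a * (-1) ^ b"
proof -
  obtain c where a: "a = b + c" using assms le_Suc_ex by blast
  have "(-1::real) ^ a * (-1) ^ b = (-1) ^ c * ((-1) ^ b * (-1) ^ b)" unfolding a power_add by simp
  also have "(-1::real) ^ b * (-1) ^ b = 1" by (simp flip: power_add)
  finally show ?thesis using a by simp
qed

lemma indep_subset: "indep adj I \<Longrightarrow> J \<subseteq> I \<Longrightarrow> indep adj J"
  unfolding indep_def by blast

lemma GamS_GamP: "GamS F adj R \<subseteq> GamP F adj R"
  unfolding GamS_def GamP_def by auto

lemma GamP_sub: "R \<subseteq> F \<Longrightarrow> GamP F adj R \<subseteq> F"
  unfolding GamP_def Gam_def by auto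

lemma qS_sumInd:
  fixes p :: "'a set \<Rightarrow> real"
  assumes fF: "finite F" and GF: "G \<subseteq> F"
  shows "(\<Sum>J\<in>IndS adj G. qS F adj p J) =
         (\<Sum>I\<in>{I\<in>IndS adj F. I \<inter> G = {}}. (-1) ^ card I * (\<Prod>f\<in>I. p f))"
proof -
  let ?P = "\<lambda>I. \<Prod>f\<in>I. p f"
  have fIF: "finite (IndS adj F)" using IndS_fin[OF fF] .
  have fIG: "finite (IndS adj G)" using IndS_fin[OF finite_subset[OF GF fF]] .
  have "(\<Sum>J\<in>IndS adj G. qS F adj p J) =
      (\<Sum>J\<in>IndS adj G. \<Sum>I\<in>{I\<in>IndS adj F. J \<subseteq> I}. (-1) ^ (card I - card J) * ?P I)"
    unfolding qS_def by simp
  also have "\<dots> = (\<Sum>I\<in>IndS adj F. \<Sum>J\<in>{J\<in>IndS adj G. J \<subseteq> I}. (-1) ^ (card I - card J) * ?P I)"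
    using sum.swap_restrict[OF fIG fIF, of "\<lambda>J I. (-1) ^ (card I - card J) * ?P I" "\<lambda>J I. J \<subseteq> I"]
    by simp
  also have "\<dots> = (\<Sum>I\<in>IndS adj F. if I \<inter> G = {} then (-1) ^ card I * ?P I else 0)"
  proof (rule sum.cong[OF refl])
    fix I assume I: "I \<in> IndS adj F"
    have fI: "finite I" using finite_subset[OF IndS_subF[OF I] fF] .
    have eqset: "{J\<in>IndS adj G. J \<subseteq> I} = Pow (I \<inter> G)"
    proof (intro equalityI subsetI)
      fix J assume "J \<in> {J\<in>IndS adj G. J \<subseteq> I}"
      then show "J \<in> Pow (I \<inter> G)" unfolding IndS_def by auto
    next
      fix J assume J: "J \<in> Pow (I \<inter> G)"
      then have JG: "J \<subseteq> G" and JI: "J \<subseteq> I" by auto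
      have "indep adj I" using I unfolding IndS_def by simp
      then have "indep adj J" using indep_subset JI by blast
      then show "J \<in> {J\<in>IndS adj G. J \<subseteq> I}" using JG JI unfolding IndS_def by simp
    qed
    have "(\<Sum>J\<in>{J\<in>IndS adj G. J \<subseteq> I}. (-1) ^ (card I - card J) * ?P I)
        = (\<Sum>J\<in>Pow (I \<inter> G). ((-1) ^ card I * ?P I) * (-1) ^ card J)"
    proof (unfold eqset, rule sum.cong[OF refl])
      fix J assume "J \<in> Pow (I \<inter> G)"
      then have "card J \<le> card I" using fI by (intro card_mono) auto
      then show "(-1) ^ (card I - card J) * ?P I = ((-1) ^ card I * ?P I) * (-1) ^ card J"
        using neg1_pow_diff by simp
    qed
    also have "\<dots> = ((-1) ^ card I * ?P I) * (\<Sum>J\<in>Pow (I \<inter> G). (-1) ^ card J)"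
      by (simp add: sum_distrib_left)
    also have "\<dots> = (if I \<inter> G = {} then (-1) ^ card I * ?P I else 0)"
      using alt_sum_pow[of "I \<inter> G"] fI by simp
    finally show "(\<Sum>J\<in>{J\<in>IndS adj G. J \<subseteq> I}. (-1) ^ (card I - card J) * ?P I)
        = (if I \<inter> G = {} then (-1) ^ card I * ?P I else 0)" .
  qed
  also have "\<dots> = (\<Sum>I\<in>{I\<in>IndS adj F. I \<inter> G = {}}. (-1) ^ card I * ?P I)"
    using fIF by (simp add: sum.inter_filter)
  finally show ?thesis .
qed

lemma qS_R:
  fixes p :: "'a set \<Rightarrow> real"
  assumes fF: "finite F" and sym: "\<forall>f\<in>F. \<forall>g\<in>F. adj f g \<longrightarrow> adj g f"
    and R: "R \<in> IndS adj F"
  shows "qS F adj p R = (\<Prod>f\<in>R. p f) *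
     (\<Sum>I\<in>{I\<in>IndS adj F. I \<inter> GamP F adj R = {}}. (-1) ^ card I * (\<Prod>f\<in>I. p f))"
proof -
  let ?P = "\<lambda>I. \<Prod>f\<in>I. p f"
  let ?G = "GamP F adj R"
  let ?S = "{I\<in>IndS adj F. I \<inter> ?G = {}}"
  let ?T = "{I\<in>IndS adj F. R \<subseteq> I}"
  have RF: "R \<subseteq> F" using IndS_subF[OF R] .
  have RG: "R \<subseteq> ?G" unfolding GamP_def by auto
  have fR: "finite R" using finite_subset[OF RF fF] .
  have Rind: "indep adj R" using R unfolding IndS_def by simp
  have bij: "bij_betw (\<lambda>I'. R \<union> I') ?S ?T"
  proof (rule bij_betw_byWitness[where f' = "\<lambda>I. I - R"])
    show "\<forall>a\<in>?S. R \<union> a - R = a" using RG by blast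
    show "\<forall>a\<in>?T. R \<union> (a - R) = a" by blast
    show "(\<lambda>I'. R \<union> I') ` ?S \<subseteq> ?T"
    proof
      fix X assume "X \<in> (\<lambda>I'. R \<union> I') ` ?S"
      then obtain I' where I': "I' \<in> ?S" "X = R \<union> I'" by blast
      have I'F: "I' \<subseteq> F" and I'ind: "indep adj I'" and I'G: "I' \<inter> ?G = {}"
        using I'(1) unfolding IndS_def by auto
      have "indep adj (R \<union> I')"
        unfolding indep_def
      proof (intro ballI impI)
        fix x y assume xy: "x \<in> R \<union> I'" "y \<in> R \<union> I'" "x \<noteq> y"
        show "\<not> adj x y"
        proof
          assume a: "adj x y"
          consider "x \<in> R" "y \<in> R" | "x \<in> I'" "y \<in> I'" | "x \<in> R" "y \<in> I'" | "x \<in> I'" "y \<in> R"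
            using xy by blast
          then show False
          proof cases
            case 1 then show ?thesis using Rind xy a unfolding indep_def by blast
          next
            case 2 then show ?thesis using I'ind xy a unfolding indep_def by blast
          next
            case 3
            then have "y \<in> Gam F adj x" using a I'F unfolding Gam_def by blast
            then have "y \<in> ?G" using 3 unfolding GamP_def by blast
            then show ?thesis using I'G 3 by blast
          next
            case 4
            then have "adj y x" using sym a I'F RF by blast
            then have "x \<in> Gam F adj y" using 4 I'F unfolding Gam_def by blast
            then have "x \<in> ?G" using 4 unfolding GamP_def by blast
            then show ?thesis using I'G 4 by blast
          qed
        qed
      qed
      then show "X \<in> ?T" using I' RF I'F unfolding IndS_def by auto
    qed
    show "(\<lambda>I. I - R) ` ?T \<subseteq> ?S"
    proof
      fix X assume "X \<in> (\<lambda>I. I - R) ` ?T"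
      then obtain I where I: "I \<in> ?T" "X = I - R" by blast
      have IF: "I \<subseteq> F" and Iind: "indep adj I" and RI: "R \<subseteq> I"
        using I(1) unfolding IndS_def by auto
      have "(I - R) \<inter> ?G = {}"
      proof (rule ccontr)
        assume "(I - R) \<inter> ?G \<noteq> {}"
        then obtain g f where g: "g \<in> I" "g \<notin> R" "f \<in> R" "g = f \<or> g \<in> Gam F adj f"
          unfolding GamP_def by blast
        then have "adj f g" "f \<noteq> g" unfolding Gam_def by auto
        then show False using Iind g RI unfolding indep_def by blast
      qed
      moreover have "indep adj (I - R)" using Iind unfolding indep_def by blast
      ultimately show "X \<in> ?S" using I IF unfolding IndS_def by auto
    qed
  qed
  have "qS F adj p R = (\<Sum>I\<in>?T. (-1) ^ (card I - card R) * ?P I)"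
    unfolding qS_def by simp
  also have "\<dots> = (\<Sum>I'\<in>?S. (-1) ^ (card (R \<union> I') - card R) * ?P (R \<union> I'))"
    using sum.reindex_bij_betw[OF bij, of "\<lambda>I. (-1) ^ (card I - card R) * ?P I"] by simp
  also have "\<dots> = (\<Sum>I'\<in>?S. ?P R * ((-1) ^ card I' * ?P I'))"
  proof (rule sum.cong[OF refl])
    fix I' assume I': "I' \<in> ?S"
    have I'F: "I' \<subseteq> F" using I' unfolding IndS_def by auto
    have fI': "finite I'" using finite_subset[OF I'F fF] .
    have dis: "R \<inter> I' = {}" using I' RG by blast
    have "card (R \<union> I') = card R + card I'" using card_Un_disjoint[OF fR fI' dis] .
    moreover have "?P (R \<union> I') = ?P R * ?P I'" using prod.union_disjoint[OF fR fI' dis] .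
    ultimately show "(-1) ^ (card (R \<union> I') - card R) * ?P (R \<union> I') = ?P R * ((-1) ^ card I' * ?P I')"
      by simp
  qed
  also have "\<dots> = ?P R * (\<Sum>I'\<in>?S. (-1) ^ card I' * ?P I')"
    by (simp add: sum_distrib_left)
  finally show ?thesis .
qed

lemma qS_identity:
  fixes p :: "'a set \<Rightarrow> real"
  assumes fF: "finite F" and sym: "\<forall>f\<in>F. \<forall>g\<in>F. adj f g \<longrightarrow> adj g f"
    and R: "R \<in> IndS adj F"
  shows "qS F adj p R = (\<Prod>f\<in>R. p f) * (\<Sum>J\<in>IndS adj (GamP F adj R). qS F adj p J)"
  using qS_R[OF fF sym R, of p] qS_sumInd[OF fF GamP_sub[OF IndS_subF[OF R]], of adj p] by simp

lemma case2_cond: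
  fixes p psi :: "'a set \<Rightarrow> real"
  assumes fF: "finite F" and sym: "\<forall>f\<in>F. \<forall>g\<in>F. adj f g \<longrightarrow> adj g f"
    and q0: "\<forall>S. S \<subseteq> F \<longrightarrow> qS F adj p S \<ge> 0" and qe: "qS F adj p {} > 0"
    and psi: "\<forall>f\<in>F. 0 \<le> psi f \<and> psi f \<le> p f"
  shows "\<forall>R\<in>IndS adj F. (\<Prod>f\<in>R. psi f) * (\<Sum>J\<in>IndS adj (GamS F adj R). qS F adj p J / qS F adj p {})
           \<le> qS F adj p R / qS F adj p {}"
proof
  fix R assume R: "R \<in> IndS adj F"
  let ?q = "qS F adj p"
  have RF: "R \<subseteq> F" using IndS_subF[OF R] .
  have GP: "GamP F adj R \<subseteq> F" using GamP_sub[OF RF] .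
  have fP: "finite (IndS adj (GamP F adj R))" using IndS_fin[OF finite_subset[OF GP fF]] .
  have nnJ: "\<forall>J\<in>IndS adj (GamP F adj R). ?q J / ?q {} \<ge> 0"
    using q0 qe GP unfolding IndS_def by auto
  have X: "(\<Sum>J\<in>IndS adj (GamS F adj R). ?q J / ?q {}) \<le> (\<Sum>J\<in>IndS adj (GamP F adj R). ?q J / ?q {})"
    using IndS_sub[OF GamS_GamP[of F adj R]] fP nnJ by (intro sum_mono2) auto
  have X0: "(\<Sum>J\<in>IndS adj (GamS F adj R). ?q J / ?q {}) \<ge> 0"
    using nnJ IndS_sub[OF GamS_GamP[of F adj R]] by (intro sum_nonneg) auto
  have P: "(\<Prod>f\<in>R. psi f) \<le> (\<Prod>f\<in>R. p f)" using psi RF by (intro prod_mono) auto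
  have P0: "(\<Prod>f\<in>R. psi f) \<ge> 0" using psi RF by (intro prod_nonneg) auto
  have "(\<Prod>f\<in>R. psi f) * (\<Sum>J\<in>IndS adj (GamS F adj R). ?q J / ?q {})
      \<le> (\<Prod>f\<in>R. p f) * (\<Sum>J\<in>IndS adj (GamP F adj R). ?q J / ?q {})"
    by (rule mult_mono[OF P X _ X0]) (use P0 P in linarith)
  also have "\<dots> = ((\<Prod>f\<in>R. p f) * (\<Sum>J\<in>IndS adj (GamP F adj R). ?q J)) / ?q {}"
    unfolding sum_divide_distrib[symmetric] by (rule times_divide_eq_right)
  also have "\<dots> = ?q R / ?q {}" using qS_identity[OF fF sym R, of p] by simp
  finally show "(\<Prod>f\<in>R. psi f) * (\<Sum>J\<in>IndS adj (GamS F adj R). ?q J / ?q {}) \<le> ?q R / ?q {}" .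
qed



definition spart :: "'a set set \<Rightarrow> ('a set \<Rightarrow> 'a set \<Rightarrow> bool) \<Rightarrow> 'a set list \<Rightarrow> 'a set list list" where
  "spart F adj W = (THE Ws. stable_partition F adj Ws \<and> concat Ws = W)"

lemma part_eq:
  assumes "stable_partition F adj Ws" "concat Ws = W"
  shows "spart F adj W = Ws"
  unfolding spart_def
proof (rule the_equality)
  show "stable_partition F adj Ws \<and> concat Ws = W" using assms by simp
  fix Ws' assume "stable_partition F adj Ws' \<and> concat Ws' = W"
  then show "Ws' = Ws" using sp_unique[of F adj Ws' Ws] assms by simp
qed

lemma RW_part: "W \<noteq> [] \<Longrightarrow> RW F adj W = set (hd (spart F adj W))"
  unfolding RW_def spart_def by simp

lemma Stab_struct:
  assumes "W \<in> Stab Omega F rho adj perm" "W \<noteq> []"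
  obtains Ws where "stable_partition F adj Ws" "concat Ws = W"
    "\<forall>w\<in>set Ws. sorted_wrt (\<lambda>f g. perm f < perm g) w"
    "spart F adj W = Ws" "RW F adj W = set (hd Ws)"
    "\<exists>ss. walk Omega F rho ss W \<or> walk Omega F rho ss (rev W)"
proof -
  have ps: "pi_stable_word F adj perm W" and wk: "\<exists>ss. walk Omega F rho ss W \<or> walk Omega F rho ss (rev W)"
    using assms(1) unfolding Stab_def by auto
  obtain Ws where Ws: "stable_partition F adj Ws" "concat Ws = W"
    "\<forall>w\<in>set Ws. sorted_wrt (\<lambda>f g. perm f < perm g) w"
    using ps assms(2) unfolding pi_stable_word_def by blast
  have pe: "spart F adj W = Ws" using part_eq[OF Ws(1,2)] .
  have "RW F adj W = set (hd Ws)" using RW_part[OF assms(2)] pe by simp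
  then show ?thesis using that Ws pe wk by blast
qed

lemma lamW_concat:
  fixes lam :: "'a set \<Rightarrow> real"
  assumes th: "theta \<noteq> 0"
  shows "\<forall>w\<in>set Ws. distinct w \<Longrightarrow>
    lamW lam (concat Ws) = theta ^ (length (concat Ws)) * wt (\<lambda>f. lam f / theta) (map set Ws)"
proof (induction Ws)
  case Nil
  then show ?case unfolding lamW_def by simp
next
  case (Cons w rest)
  have dw: "distinct w" using Cons.prems by simp
  have "prod_list (map lam w) = (\<Prod>f\<in>set w. lam f)"
    using prod.distinct_set_conv_list[OF dw, of lam] by simp
  also have "\<dots> = (\<Prod>f\<in>set w. theta * (lam f / theta))" using th by simp
  also have "\<dots> = theta ^ card (set w) * (\<Prod>f\<in>set w. lam f / theta)"
    by (simp only: prod.distrib prod_constant)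
  also have "card (set w) = length w" using distinct_card[OF dw] .
  finally have pw: "prod_list (map lam w) = theta ^ length w * (\<Prod>f\<in>set w. lam f / theta)" .
  have "lamW lam (concat (w # rest)) = prod_list (map lam w) * lamW lam (concat rest)"
    unfolding lamW_def by simp
  also have "\<dots> = (theta ^ length w * (\<Prod>f\<in>set w. lam f / theta)) *
      (theta ^ (length (concat rest)) * wt (\<lambda>f. lam f / theta) (map set rest))"
    using pw Cons by simp
  also have "\<dots> = theta ^ (length (concat (w # rest))) * wt (\<lambda>f. lam f / theta) (map set (w # rest))"
    by (simp add: power_add)
  finally show ?case .
qed

lemma lam_nonneg:
  assumes S: "setting Omega F rho omega adj" and cb: "charge_bound Omega F rho omega lam" and f: "f \<in> F"
  shows "lam f \<ge> 0"
proof -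
  have fO: "f \<noteq> {}" "f \<subseteq> Omega" using setting_D(3)[OF S] f by auto
  obtain s' where s': "s' \<in> f" using fO by blast
  have s'O: "s' \<in> Omega" using s' fO by blast
  have "lam f \<ge> (\<Sum>s \<in> {s \<in> f. s' \<in> Asupp Omega rho f s}. rho f s s' * omega s / omega s')"
    using cb f s'O unfolding charge_bound_def by blast
  moreover have "(\<Sum>s \<in> {s \<in> f. s' \<in> Asupp Omega rho f s}. rho f s s' * omega s / omega s') \<ge> 0"
  proof (rule sum_nonneg)
    fix s assume s: "s \<in> {s \<in> f. s' \<in> Asupp Omega rho f s}"
    then have sO: "s \<in> Omega" "s \<in> f" using fO by auto
    have "rho f s s' \<ge> 0" using setting_D(4)[OF S] sO f s'O by blast
    moreover have "omega s > 0" "omega s' > 0" using setting_D(5)[OF S] sO s'O by auto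
    ultimately show "rho f s s' * omega s / omega s' \<ge> 0" by simp
  qed
  ultimately show ?thesis by linarith
qed

lemma sorted_block_eq:
  fixes perm :: "'a \<Rightarrow> nat"
  assumes inj: "inj_on perm F" and F1: "set w1 \<subseteq> F" and F2: "set w2 \<subseteq> F"
    and s1: "sorted_wrt (\<lambda>f g. perm f < perm g) w1" and s2: "sorted_wrt (\<lambda>f g. perm f < perm g) w2"
    and eq: "set w1 = set w2"
  shows "w1 = w2"
proof -
  have m1: "sorted_wrt (<) (map perm w1)" using s1 by (simp add: sorted_wrt_map)
  have m2: "sorted_wrt (<) (map perm w2)" using s2 by (simp add: sorted_wrt_map)
  have a1: "sorted (map perm w1)" "distinct (map perm w1)" using m1 strict_sorted_iff by auto
  have a2: "sorted (map perm w2)" "distinct (map perm w2)" using m2 strict_sorted_iff by auto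
  have a3: "set (map perm w1) = set (map perm w2)" using eq by simp
  have "map perm w1 = map perm w2" using sorted_distinct_set_unique[OF a1 a2 a3] .
  moreover have "inj_on perm (set w1 \<union> set w2)" using inj_on_subset[OF inj] F1 F2 by blast
  ultimately show ?thesis using inj_on_map_eq_map by blast
qed

lemma blocks_eq:
  fixes perm :: "'a \<Rightarrow> nat"
  assumes inj: "inj_on perm F"
  shows "\<forall>w\<in>set Ws1. sorted_wrt (\<lambda>f g. perm f < perm g) w \<and> set w \<subseteq> F \<Longrightarrow>
    \<forall>w\<in>set Ws2. sorted_wrt (\<lambda>f g. perm f < perm g) w \<and> set w \<subseteq> F \<Longrightarrow>
    map set Ws1 = map set Ws2 \<Longrightarrow> Ws1 = Ws2"
proof (induction Ws1 arbitrary: Ws2)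
  case Nil
  then show ?case by simp
next
  case (Cons w rest)
  obtain v rest2 where W2: "Ws2 = v # rest2" using Cons.prems(3) by (cases Ws2) auto
  have "set w = set v" "map set rest = map set rest2" using Cons.prems(3) W2 by auto
  moreover have "w = v"
    using sorted_block_eq[OF inj, of w v] Cons.prems(1,2) W2 \<open>set w = set v\<close> by simp
  moreover have "rest = rest2" using Cons.IH[of rest2] Cons.prems(1,2) W2 \<open>map set rest = map set rest2\<close> by simp
  ultimately show ?case using W2 by simp
qed

lemma gseq_chain:
  "\<forall>I\<in>set (a # Ls). I \<noteq> {} \<and> I \<in> IndS adj F \<Longrightarrow>
   \<forall>r. Suc r < length (a # Ls) \<longrightarrow> (a # Ls) ! Suc r \<subseteq> GamS F adj ((a # Ls) ! r) \<Longrightarrow>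
   gseq F adj a Ls"
proof (induction Ls arbitrary: a)
  case Nil
  then show ?case by simp
next
  case (Cons b rest)
  have "Suc 0 < length (a # b # rest)" by simp
  then have "(a # b # rest) ! Suc 0 \<subseteq> GamS F adj ((a # b # rest) ! 0)" using Cons.prems(2) by blast
  then have "b \<subseteq> GamS F adj a" by simp
  moreover have "b \<noteq> {} \<and> b \<in> IndS adj F" using Cons.prems(1) by simp
  moreover have "gseq F adj b rest"
  proof (rule Cons.IH)
    show "\<forall>I\<in>set (b # rest). I \<noteq> {} \<and> I \<in> IndS adj F" using Cons.prems(1) by simp
    show "\<forall>r. Suc r < length (b # rest) \<longrightarrow> (b # rest) ! Suc r \<subseteq> GamS F adj ((b # rest) ! r)"
    proof (intro allI impI)
      fix r assume "Suc r < length (b # rest)"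
      then have "Suc (Suc r) < length (a # b # rest)" by simp
      then have "(a # b # rest) ! Suc (Suc r) \<subseteq> GamS F adj ((a # b # rest) ! Suc r)"
        using Cons.prems(2) by blast
      then show "(b # rest) ! Suc r \<subseteq> GamS F adj ((b # rest) ! r)" by simp
    qed
  qed
  ultimately show ?case by simp
qed



lemma finite_bound:
  fixes lam :: "'a set \<Rightarrow> real" and mu :: "'a set set \<Rightarrow> real" and perm :: "'a set \<Rightarrow> nat"
  assumes S: "setting Omega F rho omega adj" and inj: "inj_on perm F"
    and th0: "0 < theta" and th1: "theta < 1"
    and lam0: "\<forall>f\<in>F. lam f \<ge> 0"
    and M0: "\<forall>J\<in>IndS adj F. mu J \<ge> 0" and M1: "mu {} = 1"
    and cond: "\<forall>R\<in>IndS adj F. (\<Prod>f\<in>R. lam f / theta) * (\<Sum>J\<in>IndS adj (GamS F adj R). mu J) \<le> mu R"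
    and R: "R \<in> IndS adj F" and fA: "finite A" and A: "A \<subseteq> StabRt Omega F rho adj perm R t"
  shows "(\<Sum>W\<in>A. lamW lam W) \<le> mu R * theta ^ t"
proof (cases "R = {}")
  case True
  have Ae: "W = []" if W: "W \<in> A" for W
  proof (rule ccontr)
    assume ne: "W \<noteq> []"
    have WS: "W \<in> Stab Omega F rho adj perm" "RW F adj W = R" using W A unfolding StabRt_def by auto
    obtain Ws where Ws: "stable_partition F adj Ws" "RW F adj W = set (hd Ws)"
      using Stab_struct[OF WS(1) ne] by metis
    have "Ws \<noteq> []" using Ws(1) unfolding stable_partition_def by simp
    then have "hd Ws \<in> set Ws" by simp
    then have "hd Ws \<noteq> []" using sp_blocks(1)[OF Ws(1)] by blast
    then have "set (hd Ws) \<noteq> {}" by simp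
    then show False using Ws(2) WS(2) True by simp
  qed
  show ?thesis
  proof (cases "[] \<in> A")
    case True
    then have "A = {[]}" using Ae by blast
    moreover have "t = 0" using True A unfolding StabRt_def by auto
    ultimately show ?thesis using M1 \<open>R = {}\<close> unfolding lamW_def by simp
  next
    case False
    then have "A = {}" using Ae by blast
    then show ?thesis using M1 \<open>R = {}\<close> th0 by simp
  qed
next
  case Rne: False
  define psi where "psi = (\<lambda>f. lam f / theta)"
  define K where "K = (\<lambda>W. tl (map set (spart F adj W)))"
  have fF: "finite F" using setting_D(2)[OF S] .
  have psi0: "\<forall>f\<in>F. psi f \<ge> 0" using lam0 th0 unfolding psi_def by simp
  have RF: "R \<subseteq> F" using IndS_subF[OF R] .
  have pR0: "(\<Prod>f\<in>R. psi f) \<ge> 0" using pw_nonneg[OF psi0 RF] .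
  have key: "W \<noteq> [] \<and> map set (spart F adj W) = R # K W \<and> gseq F adj R (K W) \<and>
      lamW lam W = theta ^ length W * ((\<Prod>f\<in>R. psi f) * wt psi (K W)) \<and> t \<le> length W \<and>
      (\<forall>w\<in>set (spart F adj W). sorted_wrt (\<lambda>f g. perm f < perm g) w \<and> set w \<subseteq> F) \<and>
      concat (spart F adj W) = W" if W: "W \<in> A" for W
  proof -
    have WS: "W \<in> Stab Omega F rho adj perm" "RW F adj W = R" "t \<le> length W"
      using W A unfolding StabRt_def by auto
    have ne: "W \<noteq> []" using WS(2) Rne unfolding RW_def by auto
    obtain Ws where Ws: "stable_partition F adj Ws" "concat Ws = W"
      "\<forall>w\<in>set Ws. sorted_wrt (\<lambda>f g. perm f < perm g) w"
      "spart F adj W = Ws" "RW F adj W = set (hd Ws)"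
      "\<exists>ss. walk Omega F rho ss W \<or> walk Omega F rho ss (rev W)"
      using Stab_struct[OF WS(1) ne] by blast
    obtain w0 rest where Wsc: "Ws = w0 # rest" using Ws(1) unfolding stable_partition_def
      by (cases Ws) auto
    have w0R: "set w0 = R" using Ws(5) WS(2) Wsc by simp
    have Kw: "K W = map set rest" unfolding K_def using Ws(4) Wsc by simp
    have msW: "map set (spart F adj W) = R # K W" using Ws(4) Wsc w0R Kw by simp
    have blk: "w \<noteq> [] \<and> distinct w \<and> set w \<in> IndS adj F" if "w \<in> set Ws" for w
      using sp_blocks[OF Ws(1) that] by blast
    obtain ss where ss: "walk Omega F rho ss (concat Ws) \<or> walk Omega F rho ss (rev (concat Ws))"
      using Ws(6) Ws(2) by blast
    have g: "gseq F adj (set w0) (map set rest)"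
    proof (rule gseq_chain)
      show "\<forall>I\<in>set (set w0 # map set rest). I \<noteq> {} \<and> I \<in> IndS adj F"
        using blk Wsc by auto
      show "\<forall>r. Suc r < length (set w0 # map set rest) \<longrightarrow>
          (set w0 # map set rest) ! Suc r \<subseteq> GamS F adj ((set w0 # map set rest) ! r)"
      proof (intro allI impI)
        fix r assume r: "Suc r < length (set w0 # map set rest)"
        have eqm: "set w0 # map set rest = map set Ws" using Wsc by simp
        have r': "Suc r < length Ws" using r eqm by simp
        have "set (Ws ! Suc r) \<subseteq> GamS F adj (set (Ws ! r))"
          using walk_sp_gam[OF S Ws(1) ss r'] .
        then show "(set w0 # map set rest) ! Suc r \<subseteq> GamS F adj ((set w0 # map set rest) ! r)"
          unfolding eqm using r' by simp
      qed
    qed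
    have lw: "lamW lam W = theta ^ length W * wt psi (map set Ws)"
      using lamW_concat[of theta Ws lam] th0 blk Ws(2) unfolding psi_def by simp
    also have "wt psi (map set Ws) = (\<Prod>f\<in>R. psi f) * wt psi (K W)" using Wsc w0R Kw by simp
    finally have lw2: "lamW lam W = theta ^ length W * ((\<Prod>f\<in>R. psi f) * wt psi (K W))" .
    have bl: "\<forall>w\<in>set (spart F adj W). sorted_wrt (\<lambda>f g. perm f < perm g) w \<and> set w \<subseteq> F"
      using Ws(3,4) blk IndS_subF by blast
    show ?thesis using ne msW g w0R Kw lw2 WS(3) bl Ws(2,4) by simp
  qed
  have injK: "inj_on K A"
  proof (rule inj_onI)
    fix W1 W2 assume W: "W1 \<in> A" "W2 \<in> A" "K W1 = K W2"
    have "map set (spart F adj W1) = map set (spart F adj W2)" using key[OF W(1)] key[OF W(2)] W(3) by simp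
    then have "spart F adj W1 = spart F adj W2"
      using blocks_eq[OF inj] key[OF W(1)] key[OF W(2)] by blast
    then show "W1 = W2" using key[OF W(1)] key[OF W(2)] by metis
  qed
  have wt0: "wt psi (K W) \<ge> 0" if "W \<in> A" for W using wt_nonneg[OF psi0] key[OF that] by blast
  have "(\<Sum>W\<in>A. lamW lam W) = (\<Sum>W\<in>A. theta ^ length W * ((\<Prod>f\<in>R. psi f) * wt psi (K W)))"
    using key by (intro sum.cong) auto
  also have "\<dots> \<le> (\<Sum>W\<in>A. theta ^ t * ((\<Prod>f\<in>R. psi f) * wt psi (K W)))"
  proof (rule sum_mono)
    fix W assume W: "W \<in> A"
    have "theta ^ length W \<le> theta ^ t" using key[OF W] th0 th1 by (intro power_decreasing) auto
    moreover have "(\<Prod>f\<in>R. psi f) * wt psi (K W) \<ge> 0" using pR0 wt0[OF W] by simp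
    ultimately show "theta ^ length W * ((\<Prod>f\<in>R. psi f) * wt psi (K W))
        \<le> theta ^ t * ((\<Prod>f\<in>R. psi f) * wt psi (K W))" by (rule mult_right_mono)
  qed
  also have "\<dots> = theta ^ t * ((\<Prod>f\<in>R. psi f) * (\<Sum>W\<in>A. wt psi (K W)))"
    by (simp add: sum_distrib_left)
  also have "(\<Sum>W\<in>A. wt psi (K W)) = (\<Sum>Ks\<in>K ` A. wt psi Ks)"
    using sum.reindex[OF injK, of "wt psi"] by simp
  also have "(\<Prod>f\<in>R. psi f) * (\<Sum>Ks\<in>K ` A. wt psi Ks) \<le> mu R"
  proof -
    have fB: "finite (K ` A)" using fA by simp
    have "\<forall>Ks\<in>K ` A. gseq F adj R Ks \<and> length Ks \<le> Max (length ` K ` A)"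
    proof
      fix Ks assume Ks: "Ks \<in> K ` A"
      then obtain W where W: "W \<in> A" "Ks = K W" by blast
      have "gseq F adj R Ks" using key[OF W(1)] W(2) by simp
      moreover have "length Ks \<le> Max (length ` K ` A)" using fB Ks by (intro Max_ge) auto
      ultimately show "gseq F adj R Ks \<and> length Ks \<le> Max (length ` K ` A)" by simp
    qed
    moreover have "\<forall>R\<in>IndS adj F. (\<Prod>f\<in>R. psi f) * (\<Sum>J\<in>IndS adj (GamS F adj R). mu J) \<le> mu R"
      using cond unfolding psi_def .
    ultimately show ?thesis using main_bound[OF fF psi0 M0 M1, of R "K ` A"] R fB by blast
  qed
  then have "theta ^ t * ((\<Prod>f\<in>R. psi f) * (\<Sum>Ks\<in>K ` A. wt psi Ks)) \<le> theta ^ t * mu R"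
    using th0 by (intro mult_left_mono) auto
  finally show ?thesis by (simp add: mult.commute)
qed



lemma StabRt_nonneg:
  fixes lam :: "'a set \<Rightarrow> real"
  assumes lam0: "\<forall>f\<in>F. lam f \<ge> 0" and W: "W \<in> StabRt Omega F rho adj perm R t"
  shows "lamW lam W \<ge> 0"
proof (cases "W = []")
  case True
  then show ?thesis unfolding lamW_def by simp
next
  case False
  have "W \<in> Stab Omega F rho adj perm" using W unfolding StabRt_def by simp
  then obtain Ws where Ws: "stable_partition F adj Ws" "concat Ws = W"
    using Stab_struct[OF _ False] by metis
  have "set W \<subseteq> F"
  proof
    fix f assume "f \<in> set W"
    then obtain w where w: "w \<in> set Ws" "f \<in> set w" using Ws(2) by auto
    then show "f \<in> F" using sp_blocks(3)[OF Ws(1) w(1)] IndS_subF by blast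
  qed
  then show ?thesis unfolding lamW_def using lam0 by (intro prod_list_nonneg) auto
qed

theorem theorem3:
  fixes Omega :: "'a set" and F :: "'a set set"
    and rho :: "'a set \<Rightarrow> 'a \<Rightarrow> 'a \<Rightarrow> real" and omega :: "'a \<Rightarrow> real"
    and adj :: "'a set \<Rightarrow> 'a set \<Rightarrow> bool" and perm :: "'a set \<Rightarrow> nat"
    and lam :: "'a set \<Rightarrow> real" and mu :: "'a set set \<Rightarrow> real" and theta :: real
  assumes "setting Omega F rho omega adj"
    and "bij_betw perm F {..<card F}"
    and "(\<exists>m :: 'a set \<Rightarrow> real.
            charge_bound Omega F rho omega lam \<and> 0 < theta \<and> theta < 1 \<and>
            (\<forall>f\<in>F. m f > 0) \<and>
            (\<forall>f\<in>F. lam f / m f * (\<Sum>S \<in> IndS adj (Gam F adj f). \<Prod>g\<in>S. m g) \<le> theta) \<and>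
            mu = (\<lambda>R. \<Prod>g\<in>R. m g))
       \<or> (\<exists>p. shearer Omega F rho omega adj p lam theta \<and>
            mu = (\<lambda>R. qS F adj p R / qS F adj p {}))"
  shows "\<forall>R \<in> IndS adj F. \<forall>t::nat.
           (lamW lam) summable_on (StabRt Omega F rho adj perm R t) \<and>
           (\<Sum>\<^sub>\<infinity>W \<in> StabRt Omega F rho adj perm R t. lamW lam W) \<le> mu R * theta ^ t"
proof -
  note S = assms(1)
  have inj: "inj_on perm F" using assms(2) by (rule bij_betw_imp_inj_on)
  have fF: "finite F" using setting_D(2)[OF S] .
  have sym: "\<forall>f\<in>F. \<forall>g\<in>F. adj f g \<longrightarrow> adj g f" using setting_D(6)[OF S] .
  have conds: "0 < theta \<and> theta < 1 \<and> (\<forall>f\<in>F. lam f \<ge> 0) \<and> (\<forall>J\<in>IndS adj F. mu J \<ge> 0) \<and> mu {} = 1 \<and>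
    (\<forall>R\<in>IndS adj F. (\<Prod>f\<in>R. lam f / theta) * (\<Sum>J\<in>IndS adj (GamS F adj R). mu J) \<le> mu R)"
    using assms(3)
  proof
    assume "\<exists>m :: 'a set \<Rightarrow> real.
            charge_bound Omega F rho omega lam \<and> 0 < theta \<and> theta < 1 \<and>
            (\<forall>f\<in>F. m f > 0) \<and>
            (\<forall>f\<in>F. lam f / m f * (\<Sum>S \<in> IndS adj (Gam F adj f). \<Prod>g\<in>S. m g) \<le> theta) \<and>
            mu = (\<lambda>R. \<Prod>g\<in>R. m g)"
    then obtain m :: "'a set \<Rightarrow> real" where m: "charge_bound Omega F rho omega lam" "0 < theta" "theta < 1"
      "\<forall>f\<in>F. m f > 0"
      "\<forall>f\<in>F. lam f / m f * (\<Sum>S \<in> IndS adj (Gam F adj f). \<Prod>g\<in>S. m g) \<le> theta"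
      "mu = (\<lambda>R. \<Prod>g\<in>R. m g)" by blast
    have lam0: "\<forall>f\<in>F. lam f \<ge> 0" using lam_nonneg[OF S m(1)] by blast
    have psi0: "\<forall>f\<in>F. lam f / theta \<ge> 0" using lam0 m(2) by simp
    have c: "\<forall>f\<in>F. lam f / theta * (\<Sum>S\<in>IndS adj (Gam F adj f). \<Prod>g\<in>S. m g) \<le> m f"
    proof
      fix f assume f: "f \<in> F"
      define X where "X = (\<Sum>S\<in>IndS adj (Gam F adj f). \<Prod>g\<in>S. m g)"
      have mf: "m f > 0" using m(4) f by blast
      have h: "lam f / m f * X \<le> theta" using m(5) f unfolding X_def by blast
      have "lam f * X = (lam f / m f * X) * m f" using mf by simp
      also have "\<dots> \<le> theta * m f" using h mf by (intro mult_right_mono) auto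
      finally have "lam f * X \<le> theta * m f" .
      then have "lam f * X / theta \<le> m f" using m(2) by (simp add: divide_le_eq mult.commute)
      then show "lam f / theta * X \<le> m f" by simp
    qed
    have cc: "\<forall>R\<in>IndS adj F. (\<Prod>f\<in>R. lam f / theta) * (\<Sum>J\<in>IndS adj (GamS F adj R). \<Prod>g\<in>J. m g) \<le> (\<Prod>g\<in>R. m g)"
      using case1_cond[OF fF m(4) psi0 c] .
    have M0: "\<forall>J\<in>IndS adj F. mu J \<ge> 0"
    proof
      fix J assume "J \<in> IndS adj F"
      then have "J \<subseteq> F" by (rule IndS_subF)
      then have "prod m J > 0" using m(4) by (intro prod_pos) blast
      then show "mu J \<ge> 0" using m(6) by simp
    qed
    show ?thesis using m(2,3,6) lam0 M0 cc by simp
  next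
    assume "\<exists>p. shearer Omega F rho omega adj p lam theta \<and> mu = (\<lambda>R. qS F adj p R / qS F adj p {})"
    then obtain p where p: "shearer Omega F rho omega adj p lam theta"
      "mu = (\<lambda>R. qS F adj p R / qS F adj p {})" by blast
    have q0: "\<forall>S. S \<subseteq> F \<longrightarrow> qS F adj p S \<ge> 0" and qe: "qS F adj p {} > 0"
      and cb: "charge_bound Omega F rho omega lam" and th: "0 < theta" "theta < 1"
      and lp: "\<forall>f\<in>F. lam f \<le> theta * p f"
      using p(1) unfolding shearer_def by blast+
    have lam0: "\<forall>f\<in>F. lam f \<ge> 0" using lam_nonneg[OF S cb] by blast
    have psi: "\<forall>f\<in>F. 0 \<le> lam f / theta \<and> lam f / theta \<le> p f"
    proof
      fix f assume f: "f \<in> F"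
      have "lam f \<le> theta * p f" using lp f by blast
      then have "lam f / theta \<le> p f" using th(1) by (simp add: divide_le_eq mult.commute)
      then show "0 \<le> lam f / theta \<and> lam f / theta \<le> p f" using lam0 f th(1) by simp
    qed
    have cc: "\<forall>R\<in>IndS adj F. (\<Prod>f\<in>R. lam f / theta) *
        (\<Sum>J\<in>IndS adj (GamS F adj R). qS F adj p J / qS F adj p {}) \<le> qS F adj p R / qS F adj p {}"
      using case2_cond[OF fF sym q0 qe psi] .
    have M0: "\<forall>J\<in>IndS adj F. mu J \<ge> 0"
    proof
      fix J assume "J \<in> IndS adj F"
      then have "J \<subseteq> F" by (rule IndS_subF)
      then show "mu J \<ge> 0" using q0 qe p(2) by simp
    qed
    have M1: "mu {} = 1" using p(2) qe by simp
    show ?thesis using th lam0 M0 M1 cc p(2) by simp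
  qed
  show ?thesis
  proof (intro ballI allI)
    fix R t assume R: "R \<in> IndS adj F"
    let ?A = "StabRt Omega F rho adj perm R t"
    have lam0: "\<forall>f\<in>F. lam f \<ge> 0" using conds by blast
    have bnd: "sum (lamW lam) X \<le> mu R * theta ^ t" if "finite X" "X \<subseteq> ?A" for X
      using finite_bound[OF S inj, of theta lam mu R X t] conds R that by blast
    have nn: "\<And>W. W \<in> ?A \<Longrightarrow> lamW lam W \<ge> 0" using StabRt_nonneg[OF lam0] by blast
    have sm: "lamW lam summable_on ?A"
      using nn bnd by (intro nonneg_bounded_partial_sums_imp_summable_on[where C = "mu R * theta ^ t"]) auto
    moreover have "(\<Sum>\<^sub>\<infinity>W \<in> ?A. lamW lam W) \<le> mu R * theta ^ t"
      using sm bnd by (rule infsum_le_finite_sums)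
    ultimately show "lamW lam summable_on ?A \<and> (\<Sum>\<^sub>\<infinity>W \<in> ?A. lamW lam W) \<le> mu R * theta ^ t" by simp
  qed
qed

end
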